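(* Let $\mathcal{A}$ be an alternative $W^{*}$-factor, $\mathcal{B}$ an alternative complex $\ast$-algebra, and $\Phi:\mathcal{A}\to\mathcal{B}$ a bijection. Let $p_{1}\in\mathcal{A}$ be a projection with $p_{1}\neq 1_{\mathcal{A}}$, $p_{2}=1_{\mathcal{A}}-p_{1}$, and $\mathcal{A}_{ij}=p_{i}\mathcal{A}p_{j}$. Let $a_{12},b_{12}\in\mathcal{A}_{12}$ and $c_{21},d_{21}\in\mathcal{A}_{21}$. If $\Phi$ preserves product $ab+ba^{*}$, then (i) $\Phi(a_{12}b_{12}+a_{12}^{*})=\Phi(a_{12}b_{12})+\Phi(a_{12}^{*})$ and (ii) $\Phi(c_{21}d_{21}+c_{21}^{*})=\Phi(c_{21}d_{21})+\Phi(c_{21}^{*})$. If $\Phi$ preserves product $ab-ba^{*}$, then (i) $\Phi(a_{12}b_{12}-a_{12}^{*})=\Phi(a_{12}b_{12})+\Phi(-a_{12}^{*})$ and (ii) $\Phi(c_{21}d_{21}-c_{21}^{*})=\Phi(c_{21}d_{21})+\Phi(-c_{21}^{*})$.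
   Context: An alternative $W^{*}$-factor is a prime alternative $C^{*}$-algebra (complete normed alternative complex $\ast$-algebra with $\|a^{*}a\|=\|a\|^{2}$) that is a dual Banach space; it is unital. A projection is a nonzero self-adjoint idempotent. $\mathcal{A}_{ij}$ are the Peirce components with respect to $p_{1}$. $\Phi$ preserves product $ab+ba^{*}$ (resp. $ab-ba^{*}$) if $\Phi(ab+ba^{*})=\Phi(a)\Phi(b)+\Phi(b)\Phi(a)^{*}$ (resp. $\Phi(ab-ba^{*})=\Phi(a)\Phi(b)-\Phi(b)\Phi(a)^{*}$) for all $a,b\in\mathcal{A}$. *)

theory Defs
  imports Complex_Main
begin

text \<open>The distribution has no class of complex vector spaces, so complex scalar
multiplication is an explicit parameter \<open>sm\<close>.\<close>

definition complex_vs :: "(complex \<Rightarrow> 'a::ab_group_add \<Rightarrow> 'a) \<Rightarrow> bool" where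
  "complex_vs sm \<longleftrightarrow>
     (\<forall>c x y. sm c (x + y) = sm c x + sm c y) \<and>
     (\<forall>c d x. sm (c + d) x = sm c x + sm d x) \<and>
     (\<forall>c d x. sm (c * d) x = sm c (sm d x)) \<and>
     (\<forall>x. sm 1 x = x)"

definition complex_nvs :: "(complex \<Rightarrow> 'a::real_normed_vector \<Rightarrow> 'a) \<Rightarrow> bool" where
  "complex_nvs sm \<longleftrightarrow>
     complex_vs sm \<and> (\<forall>r x. sm (complex_of_real r) x = r *\<^sub>R x) \<and>
     (\<forall>c x. norm (sm c x) = cmod c * norm x)"

text \<open>The product and the involution are explicit parameters, since Isabelle's
multiplication type classes are associative, whereas alternative algebras are not.\<close>

definition alt_algebra :: "(complex \<Rightarrow> 'a::ab_group_add \<Rightarrow> 'a) \<Rightarrow> ('a \<Rightarrow> 'a \<Rightarrow> 'a) \<Rightarrow> bool" where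
  "alt_algebra sm m \<longleftrightarrow>
     complex_vs sm \<and>
     (\<forall>x y z. m (x + y) z = m x z + m y z) \<and>
     (\<forall>x y z. m x (y + z) = m x y + m x z) \<and>
     (\<forall>c x y. m (sm c x) y = sm c (m x y)) \<and>
     (\<forall>c x y. m x (sm c y) = sm c (m x y)) \<and>
     (\<forall>x y. m x (m x y) = m (m x x) y) \<and>
     (\<forall>x y. m (m y x) x = m y (m x x))"

definition alt_star_algebra ::
    "(complex \<Rightarrow> 'a::ab_group_add \<Rightarrow> 'a) \<Rightarrow> ('a \<Rightarrow> 'a \<Rightarrow> 'a) \<Rightarrow> ('a \<Rightarrow> 'a) \<Rightarrow> bool" where
  "alt_star_algebra sm m s \<longleftrightarrow>
     alt_algebra sm m \<and>
     (\<forall>x y. s (x + y) = s x + s y) \<and>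
     (\<forall>c x. s (sm c x) = sm (cnj c) (s x)) \<and>
     (\<forall>x. s (s x) = x) \<and>
     (\<forall>x y. s (m x y) = m (s y) (s x))"

definition alt_cstar_algebra ::
    "(complex \<Rightarrow> 'a::{real_normed_vector,banach} \<Rightarrow> 'a) \<Rightarrow> ('a \<Rightarrow> 'a \<Rightarrow> 'a) \<Rightarrow> ('a \<Rightarrow> 'a) \<Rightarrow> bool" where
  "alt_cstar_algebra sm m s \<longleftrightarrow>
     complex_nvs sm \<and> alt_star_algebra sm m s \<and>
     (\<forall>x y. norm (m x y) \<le> norm x * norm y) \<and>
     (\<forall>x. norm (m (s x) x) = (norm x)\<^sup>2)"

definition alg_ideal :: "(complex \<Rightarrow> 'a::ab_group_add \<Rightarrow> 'a) \<Rightarrow> ('a \<Rightarrow> 'a \<Rightarrow> 'a) \<Rightarrow> 'a set \<Rightarrow> bool" where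
  "alg_ideal sm m I \<longleftrightarrow>
     0 \<in> I \<and> (\<forall>x\<in>I. \<forall>y\<in>I. x + y \<in> I) \<and> (\<forall>c. \<forall>x\<in>I. sm c x \<in> I) \<and>
     (\<forall>x\<in>I. \<forall>a. m a x \<in> I \<and> m x a \<in> I)"

definition prime_alg :: "(complex \<Rightarrow> 'a::ab_group_add \<Rightarrow> 'a) \<Rightarrow> ('a \<Rightarrow> 'a \<Rightarrow> 'a) \<Rightarrow> bool" where
  "prime_alg sm m \<longleftrightarrow>
     (\<forall>I J. alg_ideal sm m I \<and> alg_ideal sm m J \<and> (\<forall>x\<in>I. \<forall>y\<in>J. m x y = 0)
             \<longrightarrow> I = {0} \<or> J = {0})"

definition bdd_cfunctional :: "(complex \<Rightarrow> 'a::real_normed_vector \<Rightarrow> 'a) \<Rightarrow> ('a \<Rightarrow> complex) \<Rightarrow> bool" where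
  "bdd_cfunctional sm f \<longleftrightarrow>
     (\<forall>x y. f (x + y) = f x + f y) \<and> (\<forall>c x. f (sm c x) = c * f x) \<and>
     (\<exists>K. \<forall>x. cmod (f x) \<le> K * norm x)"

definition fnorm :: "('a::real_normed_vector \<Rightarrow> complex) \<Rightarrow> real" where
  "fnorm f = Sup {cmod (f x) | x. norm x \<le> 1}"

text \<open>A complex Banach space is a dual Banach space iff there is a closed subspace \<open>F\<close>
  of its (complex) dual such that the canonical map \<open>a \<mapsto> (f \<mapsto> f a)\<close> is an isometric
  isomorphism of the space onto \<open>F\<^sup>*\<close> (take \<open>F\<close> = canonical image of a predual).\<close>

definition dual_banach_space :: "(complex \<Rightarrow> 'a::{real_normed_vector,banach} \<Rightarrow> 'a) \<Rightarrow> bool" where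
  "dual_banach_space sm \<longleftrightarrow>
     (\<exists>F :: ('a \<Rightarrow> complex) set.
        F \<subseteq> {f. bdd_cfunctional sm f} \<and>
        (\<lambda>_. 0) \<in> F \<and> (\<forall>f\<in>F. \<forall>g\<in>F. (\<lambda>x. f x + g x) \<in> F) \<and>
        (\<forall>c. \<forall>f\<in>F. (\<lambda>x. c * f x) \<in> F) \<and>
        (\<forall>g h. (\<forall>n. g n \<in> F) \<and> bdd_cfunctional sm h \<and>
               (\<lambda>n. fnorm (\<lambda>x. g n x - h x)) \<longlonglongrightarrow> 0 \<longrightarrow> h \<in> F) \<and>
        (\<forall>a::'a. norm a = Sup {cmod (f a) | f. f \<in> F \<and> fnorm f \<le> 1}) \<and>
        (\<forall>\<phi> :: ('a \<Rightarrow> complex) \<Rightarrow> complex.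
           (\<forall>f\<in>F. \<forall>g\<in>F. \<phi> (\<lambda>x. f x + g x) = \<phi> f + \<phi> g) \<and>
           (\<forall>c. \<forall>f\<in>F. \<phi> (\<lambda>x. c * f x) = c * \<phi> f) \<and>
           (\<exists>K. \<forall>f\<in>F. cmod (\<phi> f) \<le> K * fnorm f)
           \<longrightarrow> (\<exists>a. \<forall>f\<in>F. \<phi> f = f a)))"

text \<open>An alternative W*-factor is a prime alternative C*-algebra which is a dual Banach
  space; such an algebra is unital, and \<open>e\<close> denotes its unit.\<close>

definition alt_W_factor ::
    "(complex \<Rightarrow> 'a::{real_normed_vector,banach} \<Rightarrow> 'a) \<Rightarrow> ('a \<Rightarrow> 'a \<Rightarrow> 'a) \<Rightarrow> ('a \<Rightarrow> 'a) \<Rightarrow> 'a \<Rightarrow> bool" where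
  "alt_W_factor sm m s e \<longleftrightarrow>
     alt_cstar_algebra sm m s \<and> prime_alg sm m \<and> dual_banach_space sm \<and>
     (\<forall>x. m e x = x \<and> m x e = x)"

definition projection :: "('a::zero \<Rightarrow> 'a \<Rightarrow> 'a) \<Rightarrow> ('a \<Rightarrow> 'a) \<Rightarrow> 'a \<Rightarrow> bool" where
  "projection m s p \<longleftrightarrow> p \<noteq> 0 \<and> s p = p \<and> m p p = p"

text \<open>Peirce component \<open>p A q\<close> (unambiguous by flexibility when \<open>q = 1 - p\<close>).\<close>

definition peirce :: "('a \<Rightarrow> 'a \<Rightarrow> 'a) \<Rightarrow> 'a \<Rightarrow> 'a \<Rightarrow> 'a set" where
  "peirce m p q = {m (m p x) q | x. True}"

definition preserves_plus ::
    "('a::plus \<Rightarrow> 'a \<Rightarrow> 'a) \<Rightarrow> ('a \<Rightarrow> 'a) \<Rightarrow>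
     ('b::plus \<Rightarrow> 'b \<Rightarrow> 'b) \<Rightarrow> ('b \<Rightarrow> 'b) \<Rightarrow> ('a \<Rightarrow> 'b) \<Rightarrow> bool" where
  "preserves_plus mA sA mB sB \<Phi> \<longleftrightarrow>
     (\<forall>a b. \<Phi> (mA a b + mA b (sA a)) = mB (\<Phi> a) (\<Phi> b) + mB (\<Phi> b) (sB (\<Phi> a)))"

definition preserves_minus ::
    "('a::minus \<Rightarrow> 'a \<Rightarrow> 'a) \<Rightarrow> ('a \<Rightarrow> 'a) \<Rightarrow>
     ('b::minus \<Rightarrow> 'b \<Rightarrow> 'b) \<Rightarrow> ('b \<Rightarrow> 'b) \<Rightarrow> ('a \<Rightarrow> 'b) \<Rightarrow> bool" where
  "preserves_minus mA sA mB sB \<Phi> \<longleftrightarrow>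
     (\<forall>a b. \<Phi> (mA a b - mA b (sA a)) = mB (\<Phi> a) (\<Phi> b) - mB (\<Phi> b) (sB (\<Phi> a)))"

end

theory Submission
  imports Defs
begin


locale altstar =
  fixes sm :: "complex \<Rightarrow> 'a::ab_group_add \<Rightarrow> 'a" and m :: "'a \<Rightarrow> 'a \<Rightarrow> 'a" and s :: "'a \<Rightarrow> 'a"
  assumes asa: "alt_star_algebra sm m s"
begin
lemma addL: "m (x+y) z = m x z + m y z" using asa unfolding alt_star_algebra_def alt_algebra_def by metis
lemma addR: "m z (x+y) = m z x + m z y" using asa unfolding alt_star_algebra_def alt_algebra_def by metis
lemma smL: "m (sm c x) y = sm c (m x y)" using asa unfolding alt_star_algebra_def alt_algebra_def by metis
lemma smR: "m x (sm c y) = sm c (m x y)" using asa unfolding alt_star_algebra_def alt_algebra_def by metis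
lemma altL: "m x (m x y) = m (m x x) y" using asa unfolding alt_star_algebra_def alt_algebra_def by metis
lemma altR: "m (m y x) x = m y (m x x)" using asa unfolding alt_star_algebra_def alt_algebra_def by metis
lemma sm_add: "sm c (x + y) = sm c x + sm c y" using asa unfolding alt_star_algebra_def alt_algebra_def complex_vs_def by metis
lemma sm_addc: "sm (c + d) x = sm c x + sm d x" using asa unfolding alt_star_algebra_def alt_algebra_def complex_vs_def by metis
lemma sm_mult: "sm (c * d) x = sm c (sm d x)" using asa unfolding alt_star_algebra_def alt_algebra_def complex_vs_def by metis
lemma sm_one: "sm 1 x = x" using asa unfolding alt_star_algebra_def alt_algebra_def complex_vs_def by metis
lemma s_add: "s (x + y) = s x + s y" using asa unfolding alt_star_algebra_def by metis
lemma s_sm: "s (sm c x) = sm (cnj c) (s x)" using asa unfolding alt_star_algebra_def by metis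
lemma s_s: "s (s x) = x" using asa unfolding alt_star_algebra_def by metis
lemma s_m: "s (m x y) = m (s y) (s x)" using asa unfolding alt_star_algebra_def by metis

lemma zeroL: "m 0 z = 0" using addL[of 0 0 z] by simp
lemma zeroR: "m z 0 = 0" using addR[of z 0 0] by simp
lemma negL: "m (-x) z = - m x z" using addL[of x "-x" z] zeroL by (simp add: add_eq_0_iff)
lemma negR: "m z (-x) = - m z x" using addR[of z x "-x"] zeroR by (simp add: add_eq_0_iff)
lemma diffL: "m (x - y) z = m x z - m y z" using addL[of x "-y" z] by (simp add: negL)
lemma diffR: "m z (x - y) = m z x - m z y" using addR[of z x "-y"] by (simp add: negR)
lemma sm_zero: "sm c 0 = 0" using sm_add[of c 0 0] by simp
lemma sm_zeroc: "sm 0 x = 0" using sm_addc[of 0 0 x] by simp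
lemma sm_neg: "sm c (-x) = - sm c x" using sm_add[of c x "-x"] sm_zero by (simp add: add_eq_0_iff)
lemma sm_diff: "sm c (x - y) = sm c x - sm c y" using sm_add[of c x "-y"] by (simp add: sm_neg)
lemma sm_m1: "sm (-1) x = - x" using sm_addc[of 1 "-1" x] sm_zeroc sm_one by (simp add: add_eq_0_iff)
lemma s_zero: "s 0 = 0" using s_add[of 0 0] by simp
lemma s_neg: "s (-x) = - s x" using s_add[of x "-x"] s_zero by (simp add: add_eq_0_iff)
lemma s_diff: "s (x - y) = s x - s y" using s_add[of x "-y"] by (simp add: s_neg)
lemma sm_cancel: assumes "c \<noteq> 0" "sm c x = sm c y" shows "x = y"
proof -
  have "sm (1/c) (sm c x) = sm (1/c) (sm c y)" using assms by simp
  thus ?thesis using assms(1) by (simp add: sm_mult[symmetric] sm_one)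
qed
lemma half: assumes "(x::'a) + x = y + y" shows "x = y"
proof -
  have a: "sm (1/2) z + sm (1/2) z = z" for z using sm_addc[of "1/2" "1/2" z] by (simp add: sm_one)
  have "sm (1/2) (x + x) = sm (1/2) (y+y)" using assms by simp
  hence "sm (1/2) x + sm (1/2) x = sm (1/2) y + sm (1/2) y" by (simp only: sm_add)
  thus ?thesis using a[of x] a[of y] by simp
qed
lemma grp_aux: "(a::'a) + b + (c + d) = a + e + (f + d) \<Longrightarrow> b + c = e + f"
  by (simp add: algebra_simps)
lemma linL: "m x (m z y) + m z (m x y) = m (m x z) y + m (m z x) y"
proof -
  have h: "m x (m x y) + m z (m x y) + (m x (m z y) + m z (m z y)) = m (m x x) y + m (m z x) y + (m (m x z) y + m (m z z) y)"
    using altL[of "x+z" y] by (simp add: addL addR)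
  have "m z (m x y) + m x (m z y) = m (m z x) y + m (m x z) y"
    by (rule grp_aux[of "m (m x x) y" _ _ "m (m z z) y"]) (use h in \<open>simp add: altL\<close>)
  thus ?thesis by (metis add.commute)
qed
lemma linR: "m (m y x) z + m (m y z) x = m y (m x z) + m y (m z x)"
proof -
  have h: "m (m y x) x + m (m y z) x + (m (m y x) z + m (m y z) z) = m y (m x x) + m y (m z x) + (m y (m x z) + m y (m z z))"
    using altR[of y "x+z"] by (simp add: addL addR)
  have "m (m y z) x + m (m y x) z = m y (m z x) + m y (m x z)"
    by (rule grp_aux[of "m y (m x x)" _ _ "m y (m z z)"]) (use h in \<open>simp add: altR\<close>)
  thus ?thesis by (metis add.commute)
qed
lemma s_unit: assumes "\<forall>x. m e x = x \<and> m x e = x" shows "s e = e"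
proof -
  have u: "m (s e) x = x" for x
  proof -
    have "m (s e) x = s (s (m (s e) x))" by (simp add: s_s)
    also have "\<dots> = s (m (s x) (s (s e)))" by (simp add: s_m)
    also have "\<dots> = x" using assms by (simp add: s_s)
    finally show ?thesis .
  qed
  have "s e = m (s e) e" using assms by simp
  thus ?thesis using u by simp
qed
end

locale cset =
  fixes smA :: "complex \<Rightarrow> 'a::ab_group_add \<Rightarrow> 'a" and mA sA e p
    and smB :: "complex \<Rightarrow> 'b::ab_group_add \<Rightarrow> 'b" and mB sB
    and \<Phi> :: "'a \<Rightarrow> 'b" and \<sigma> :: complex
  assumes A: "alt_star_algebra smA mA sA" and B: "alt_star_algebra smB mB sB"
    and unit: "\<forall>x. mA e x = x \<and> mA x e = x"
    and sp: "sA p = p" and pp: "mA p p = p"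
    and bij: "bij \<Phi>" and sig: "\<sigma> = 1 \<or> \<sigma> = -1"
    and pres: "\<forall>a b. \<Phi> (mA a b + smA \<sigma> (mA b (sA a))) = mB (\<Phi> a) (\<Phi> b) + smB \<sigma> (mB (\<Phi> b) (sB (\<Phi> a)))"
begin
sublocale A: altstar smA mA sA by (unfold_locales, rule A)
sublocale B: altstar smB mB sB by (unfold_locales, rule B)

lemma eL[simp]: "mA e x = x" using unit by blast
lemma eR[simp]: "mA x e = x" using unit by blast
lemma se[simp]: "sA e = e" using A.s_unit unit by blast
lemma LL[simp]: "mA p (mA p y) = mA p y" by (simp add: A.altL pp)
lemma RR[simp]: "mA (mA y p) p = mA y p" by (simp add: A.altR pp)
lemma flex[simp]: "mA p (mA y p) = mA (mA p y) p"
  using A.linR[of p y p] by (simp add: pp)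

definition "sl11 y \<longleftrightarrow> mA p y = y \<and> mA y p = y"
definition "sl12 y \<longleftrightarrow> mA p y = y \<and> mA y p = 0"
definition "sl21 y \<longleftrightarrow> mA p y = 0 \<and> mA y p = y"
definition "sl22 y \<longleftrightarrow> mA p y = 0 \<and> mA y p = 0"
definition "P11 y = mA (mA p y) p"
definition "P12 y = mA p y - mA (mA p y) p"
definition "P21 y = mA y p - mA (mA p y) p"
definition "P22 y = y - mA p y - mA y p + mA (mA p y) p"

lemmas ls = A.addL A.addR A.diffL A.diffR A.negL A.negR A.smL A.smR A.zeroL A.zeroR
  A.sm_add A.sm_diff A.sm_neg A.sm_zero

lemma decomp: "y = P11 y + P12 y + P21 y + P22 y"
  unfolding P11_def P12_def P21_def P22_def by (simp add: algebra_simps)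

lemma P_lin:
  "P11 (x + y) = P11 x + P11 y" "P12 (x + y) = P12 x + P12 y"
  "P21 (x + y) = P21 x + P21 y" "P22 (x + y) = P22 x + P22 y"
  "P11 (x - y) = P11 x - P11 y" "P12 (x - y) = P12 x - P12 y"
  "P21 (x - y) = P21 x - P21 y" "P22 (x - y) = P22 x - P22 y"
  "P11 (- y) = - P11 y" "P12 (- y) = - P12 y"
  "P21 (- y) = - P21 y" "P22 (- y) = - P22 y"
  "P11 (smA c y) = smA c (P11 y)" "P12 (smA c y) = smA c (P12 y)"
  "P21 (smA c y) = smA c (P21 y)" "P22 (smA c y) = smA c (P22 y)"
  unfolding P11_def P12_def P21_def P22_def by (simp_all add: ls algebra_simps)

lemma P_sl:
  "sl11 y \<Longrightarrow> P11 y = y" "sl11 y \<Longrightarrow> P12 y = 0" "sl11 y \<Longrightarrow> P21 y = 0" "sl11 y \<Longrightarrow> P22 y = 0"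
  "sl12 y \<Longrightarrow> P11 y = 0" "sl12 y \<Longrightarrow> P12 y = y" "sl12 y \<Longrightarrow> P21 y = 0" "sl12 y \<Longrightarrow> P22 y = 0"
  "sl21 y \<Longrightarrow> P11 y = 0" "sl21 y \<Longrightarrow> P12 y = 0" "sl21 y \<Longrightarrow> P21 y = y" "sl21 y \<Longrightarrow> P22 y = 0"
  "sl22 y \<Longrightarrow> P11 y = 0" "sl22 y \<Longrightarrow> P12 y = 0" "sl22 y \<Longrightarrow> P21 y = 0" "sl22 y \<Longrightarrow> P22 y = y"
  unfolding P11_def P12_def P21_def P22_def sl11_def sl12_def sl21_def sl22_def by (simp_all add: ls)

definition "d = p + p - e"
definition "Jd y = mA d y + mA y d"
definition "Kp y = mA p y - mA y p"
definition "T x y = mA x y + smA \<sigma> (mA y (sA x))"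
definition "q = e - p"

lemma P_Jd: "P11 (Jd y) = P11 y + P11 y" "P12 (Jd y) = 0" "P21 (Jd y) = 0" "P22 (Jd y) = - (P22 y + P22 y)"
  unfolding P11_def P12_def P21_def P22_def Jd_def d_def by (simp_all add: ls algebra_simps)
lemma P_Kp: "P11 (Kp y) = 0" "P12 (Kp y) = P12 y" "P21 (Kp y) = - P21 y" "P22 (Kp y) = 0"
  unfolding P11_def P12_def P21_def P22_def Kp_def by (simp_all add: ls algebra_simps)
lemma P_Up: "P21 (T y p) = P21 y"
  unfolding P21_def T_def by (simp add: ls algebra_simps)
lemma P_Uq: "P12 (T y q) = P12 y"
  unfolding P12_def T_def q_def by (simp add: ls algebra_simps A.s_diff sp)
end

context cset begin

lemma inj: "\<Phi> x = \<Phi> y \<Longrightarrow> x = y" using bij by (meson bij_def injD)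
lemma surj': "\<exists>t. \<Phi> t = z" using bij by (metis bij_def surjD)

lemma presT: "\<Phi> (T a b) = mB (\<Phi> a) (\<Phi> b) + smB \<sigma> (mB (\<Phi> b) (sB (\<Phi> a)))"
  unfolding T_def using pres by blast

lemma Phi0[simp]: "\<Phi> 0 = 0"
proof -
  obtain z where z: "\<Phi> z = 0" using surj' by blast
  have "T z 0 = 0" unfolding T_def by (simp add: ls)
  hence "\<Phi> 0 = \<Phi> (T z 0)" by simp
  also have "\<dots> = 0" unfolding presT z by (simp add: B.zeroL B.zeroR B.sm_zero B.s_zero)
  finally show ?thesis .
qed

lemma pinR2: "\<Phi> t = \<Phi> y1 + \<Phi> y2 \<Longrightarrow> \<Phi> (T x t) = \<Phi> (T x y1) + \<Phi> (T x y2)"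
  unfolding presT by (simp add: B.addL B.addR B.sm_add algebra_simps)
lemma pinL2: "\<Phi> t = \<Phi> y1 + \<Phi> y2 \<Longrightarrow> \<Phi> (T t x) = \<Phi> (T y1 x) + \<Phi> (T y2 x)"
  unfolding presT by (simp add: B.addL B.addR B.sm_add B.s_add algebra_simps)
lemma pinR3: "\<Phi> t = \<Phi> y1 + \<Phi> y2 + \<Phi> y3 \<Longrightarrow> \<Phi> (T x t) = \<Phi> (T x y1) + \<Phi> (T x y2) + \<Phi> (T x y3)"
  unfolding presT by (simp add: B.addL B.addR B.sm_add algebra_simps)
lemma pinL3: "\<Phi> t = \<Phi> y1 + \<Phi> y2 + \<Phi> y3 \<Longrightarrow> \<Phi> (T t x) = \<Phi> (T y1 x) + \<Phi> (T y2 x) + \<Phi> (T y3 x)"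
  unfolding presT by (simp add: B.addL B.addR B.sm_add B.s_add algebra_simps)

lemma omega: "\<exists>w. w \<noteq> 0 \<and> \<sigma> * cnj w = w" using sig by (auto intro: exI[of _ 1] exI[of _ \<i>])
lemma tau: "\<exists>w. w \<noteq> 0 \<and> \<sigma> * cnj w = - w" using sig by (auto intro: exI[of _ 1] exI[of _ \<i>])

lemma sd: "sA d = d" unfolding d_def by (simp add: A.s_add A.s_diff sp)

lemma TJ: assumes "\<sigma> * cnj c = c" "sA a = a" shows "T (smA c a) y = smA c (mA a y + mA y a)"
proof -
  have "T (smA c a) y = smA c (mA a y) + smA (\<sigma> * cnj c) (mA y a)"
    unfolding T_def using assms(2) by (simp add: ls A.s_sm A.sm_mult)
  thus ?thesis using assms(1) by (simp add: A.sm_add)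
qed
lemma TK: assumes "\<sigma> * cnj c = - c" "sA a = a" shows "T (smA c a) y = smA c (mA a y - mA y a)"
proof -
  have "T (smA c a) y = smA c (mA a y) + smA (\<sigma> * cnj c) (mA y a)"
    unfolding T_def using assms(2) by (simp add: ls A.s_sm A.sm_mult)
  moreover have "smA (- c) z = - smA c z" for z using A.sm_mult[of "-1" c z] by (simp add: A.sm_m1)
  ultimately show ?thesis using assms(1) by (simp add: A.sm_diff)
qed

lemma sm_slot: "sl11 y \<Longrightarrow> sl11 (smA c y)" "sl12 y \<Longrightarrow> sl12 (smA c y)"
  "sl21 y \<Longrightarrow> sl21 (smA c y)" "sl22 y \<Longrightarrow> sl22 (smA c y)"
  unfolding sl11_def sl12_def sl21_def sl22_def by (simp_all add: ls)
lemma add_slot: "sl21 y \<Longrightarrow> sl21 z \<Longrightarrow> sl21 (y + z)" "sl21 y \<Longrightarrow> sl21 (- y)"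
  unfolding sl21_def by (simp_all add: ls)
lemma s_slot: "sl12 y \<Longrightarrow> sl21 (sA y)" "sl21 y \<Longrightarrow> sl12 (sA y)" "sl11 y \<Longrightarrow> sl11 (sA y)"
proof -
  have a: "mA p (sA y) = sA (mA y p)" "mA (sA y) p = sA (mA p y)" by (simp_all add: A.s_m sp)
  show "sl12 y \<Longrightarrow> sl21 (sA y)" "sl21 y \<Longrightarrow> sl12 (sA y)" "sl11 y \<Longrightarrow> sl11 (sA y)"
    unfolding sl11_def sl12_def sl21_def a by (auto simp: A.s_zero)
qed
lemma prod1: "sl12 a \<Longrightarrow> sl12 b \<Longrightarrow> sl21 (mA a b)"
  unfolding sl12_def sl21_def using A.linL[of p a b] A.linR[of a b p] by (simp add: ls)
lemma prod2: "sl12 b \<Longrightarrow> sl21 v \<Longrightarrow> sl11 (mA b v)"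
  unfolding sl12_def sl21_def sl11_def using A.linL[of p b v] A.linR[of b v p] by (simp add: ls)
lemma q_slot: "sl22 q" unfolding sl22_def q_def by (simp add: ls pp)

lemma Jd_slot: "sl11 y \<Longrightarrow> Jd y = y + y" "sl12 y \<Longrightarrow> Jd y = 0" "sl21 y \<Longrightarrow> Jd y = 0" "sl22 y \<Longrightarrow> Jd y = - (y + y)"
  unfolding Jd_def d_def sl11_def sl12_def sl21_def sl22_def by (simp_all add: ls algebra_simps)
lemma Kp_slot: "sl11 y \<Longrightarrow> Kp y = 0" "sl12 y \<Longrightarrow> Kp y = y" "sl21 y \<Longrightarrow> Kp y = - y" "sl22 y \<Longrightarrow> Kp y = 0"
  unfolding Kp_def sl11_def sl12_def sl21_def sl22_def by (simp_all)
lemma Up_slot: "sl12 y \<Longrightarrow> T y p = 0"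
  using s_slot(1)[of y] unfolding T_def sl12_def sl21_def by (simp add: ls sp)
lemma Uq_slot: "sl21 y \<Longrightarrow> T y q = 0" "sl11 y \<Longrightarrow> T y q = 0"
  using s_slot(2,3)[of y] unfolding T_def sl11_def sl12_def sl21_def q_def by (auto simp: ls sp A.s_diff)

lemma TJd: "\<sigma> * cnj c = c \<Longrightarrow> T (smA c d) y = smA c (Jd y)" unfolding Jd_def by (rule TJ[OF _ sd])
lemma TKp: "\<sigma> * cnj c = - c \<Longrightarrow> T (smA c p) y = smA c (Kp y)" unfolding Kp_def by (rule TK[OF _ sp])

lemma Jd_pin2: assumes "\<Phi> t = \<Phi> y1 + \<Phi> y2" "Jd y2 = 0" shows "Jd t = Jd y1"
proof -
  obtain w where w: "w \<noteq> 0" "\<sigma> * cnj w = w" using omega by blast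
  have "\<Phi> (T (smA w d) t) = \<Phi> (T (smA w d) y1)"
    using pinR2[OF assms(1), of "smA w d"] by (simp add: TJd[OF w(2)] assms(2) A.sm_zero)
  hence "smA w (Jd t) = smA w (Jd y1)" using inj by (simp add: TJd[OF w(2)])
  thus ?thesis using A.sm_cancel w(1) by blast
qed
lemma Jd_pin3: assumes "\<Phi> t = \<Phi> y1 + \<Phi> y2 + \<Phi> y3" "Jd y2 = 0" "Jd y3 = 0" shows "Jd t = Jd y1"
proof -
  obtain w where w: "w \<noteq> 0" "\<sigma> * cnj w = w" using omega by blast
  have "\<Phi> (T (smA w d) t) = \<Phi> (T (smA w d) y1)"
    using pinR3[OF assms(1), of "smA w d"] by (simp add: TJd[OF w(2)] assms(2,3) A.sm_zero)
  hence "smA w (Jd t) = smA w (Jd y1)" using inj by (simp add: TJd[OF w(2)])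
  thus ?thesis using A.sm_cancel w(1) by blast
qed
lemma Kp_pin2: assumes "\<Phi> t = \<Phi> y1 + \<Phi> y2" "Kp y2 = 0" shows "Kp t = Kp y1"
proof -
  obtain w where w: "w \<noteq> 0" "\<sigma> * cnj w = - w" using tau by blast
  have "\<Phi> (T (smA w p) t) = \<Phi> (T (smA w p) y1)"
    using pinR2[OF assms(1), of "smA w p"] by (simp add: TKp[OF w(2)] assms(2) A.sm_zero)
  hence "smA w (Kp t) = smA w (Kp y1)" using inj by (simp add: TKp[OF w(2)])
  thus ?thesis using A.sm_cancel w(1) by blast
qed
lemma U_pin2: assumes "\<Phi> t = \<Phi> y1 + \<Phi> y2" "T y2 x = 0" shows "T t x = T y1 x"
  using pinL2[OF assms(1), of x] assms(2) inj by simp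
lemma U_pin3: assumes "\<Phi> t = \<Phi> y1 + \<Phi> y2 + \<Phi> y3" "T y2 x = 0" "T y3 x = 0" shows "T t x = T y1 x"
  using pinL3[OF assms(1), of x] assms(2,3) inj by simp

end

context cset begin

lemma neg2: "(- (a::'a) - a = - b - b) \<longleftrightarrow> (a + a = b + b)"
  by (metis minus_add_distrib neg_equal_iff_equal diff_conv_add_uminus)
lemma neg2z: "(- (a::'a) = a) \<longleftrightarrow> (a + a = 0)"
  by (metis add.inverse_unique neg_eq_iff_add_eq_0 add_eq_0_iff)
lemma P_zero: "P11 0 = 0" "P12 0 = 0" "P21 0 = 0" "P22 0 = 0"
  unfolding P11_def P12_def P21_def P22_def by (simp_all add: ls)
lemma half0: "x + x = 0 \<Longrightarrow> x = (0::'a)" using A.half[of x 0] by simp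

lemma S2: assumes b: "sl12 b" shows "\<Phi> (q + b) = \<Phi> q + \<Phi> b"
proof -
  obtain t where t: "\<Phi> t = \<Phi> q + \<Phi> b" using surj' by blast
  have k: "Kp t = b" using Kp_pin2[of t b q] t Kp_slot(4)[OF q_slot] Kp_slot(2)[OF b] by (simp add: add.commute)
  have j: "Jd t = - (q + q)" using Jd_pin2[of t q b] t Jd_slot(2)[OF b] Jd_slot(4)[OF q_slot] by simp
  have 1: "P12 t = b" using arg_cong[OF k, of P12] P_Kp P_sl(5-8)[OF b] by simp
  have 2: "P21 t = 0" using arg_cong[OF k, of P21] P_Kp P_sl(5-8)[OF b] by simp
  have 3: "P11 t = 0" by (rule half0) (use arg_cong[OF j, of P11] P_Jd P_lin P_sl(13-16)[OF q_slot] P_zero neg2 neg2z in simp)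
  have 4: "P22 t = q" by (rule A.half) (use arg_cong[OF j, of P22] P_Jd P_lin P_sl(13-16)[OF q_slot] P_zero neg2 neg2z in simp)
  have "t = q + b" using decomp[of t] 1 2 3 4 by (simp add: add.commute)
  thus ?thesis using t by simp
qed

lemma S3: assumes a: "sl12 a" and z: "sl21 z" shows "\<Phi> (a + z) = \<Phi> a + \<Phi> z"
proof -
  obtain t where t: "\<Phi> t = \<Phi> a + \<Phi> z" using surj' by blast
  have u1: "T t p = T z p" using U_pin2[of t z a p] t Up_slot[OF a] by (simp add: add.commute)
  have u2: "T t q = T a q" using U_pin2[of t a z q] t Uq_slot(1)[OF z] by simp
  have j: "Jd t = 0" using Jd_pin2[of t a z] t Jd_slot(2)[OF a] Jd_slot(3)[OF z] by simp
  have 1: "P12 t = a" using arg_cong[OF u2, of P12] P_Uq P_sl(5-8)[OF a] by simp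
  have 2: "P21 t = z" using arg_cong[OF u1, of P21] P_Up P_sl(9-12)[OF z] by simp
  have 3: "P11 t = 0" by (rule half0) (use arg_cong[OF j, of P11] P_Jd P_lin P_zero neg2 neg2z in simp)
  have 4: "P22 t = 0" by (rule half0) (use arg_cong[OF j, of P22] P_Jd P_lin P_zero neg2 neg2z in simp)
  have "t = a + z" using decomp[of t] 1 2 3 4 by simp
  thus ?thesis using t by simp
qed

lemma S4: assumes u: "sl21 u" and w: "sl11 w" shows "\<Phi> (u + w) = \<Phi> u + \<Phi> w"
proof -
  obtain t where t: "\<Phi> t = \<Phi> u + \<Phi> w" using surj' by blast
  have k: "Kp t = - u" using Kp_pin2[of t u w] t Kp_slot(1)[OF w] Kp_slot(3)[OF u] by simp
  have j: "Jd t = w + w" using Jd_pin2[of t w u] t Jd_slot(1)[OF w] Jd_slot(3)[OF u] by (simp add: add.commute)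
  have 1: "P12 t = 0" using arg_cong[OF k, of P12] P_Kp P_lin P_sl(9-12)[OF u] by simp
  have 2: "P21 t = u" using arg_cong[OF k, of P21] P_Kp P_lin P_sl(9-12)[OF u] by simp
  have 3: "P11 t = w" by (rule A.half) (use arg_cong[OF j, of P11] P_Jd P_lin P_sl(1-4)[OF w] P_zero neg2 neg2z in simp)
  have 4: "P22 t = 0" by (rule half0) (use arg_cong[OF j, of P22] P_Jd P_lin P_sl(1-4)[OF w] P_zero neg2 neg2z in simp)
  have "t = u + w" using decomp[of t] 1 2 3 4 by (simp add: add.commute)
  thus ?thesis using t by simp
qed

lemma S5: assumes a: "sl12 a" and z: "sl21 z" and w: "sl11 w"
  shows "\<Phi> (a + z + w) = \<Phi> a + \<Phi> z + \<Phi> w"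
proof -
  obtain t where t: "\<Phi> t = \<Phi> a + \<Phi> z + \<Phi> w" using surj' by blast
  have j: "Jd t = w + w" using Jd_pin3[of t w a z] t Jd_slot(1)[OF w] Jd_slot(2)[OF a] Jd_slot(3)[OF z]
    by (simp add: algebra_simps)
  have u2: "T t q = T a q" using U_pin3[of t a z w q] t Uq_slot(1)[OF z] Uq_slot(2)[OF w] by simp
  obtain c where c: "c \<noteq> 0" "\<sigma> * cnj c = - c" using tau by blast
  have "\<Phi> (T (smA c p) t) = \<Phi> (smA c a) + \<Phi> (smA c (- z))"
    using pinR3[OF t, of "smA c p"] by (simp add: TKp[OF c(2)] Kp_slot(2)[OF a] Kp_slot(3)[OF z] Kp_slot(1)[OF w] A.sm_zero)
  also have "\<dots> = \<Phi> (smA c a + smA c (- z))"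
    using S3[OF sm_slot(2)[OF a] sm_slot(3)[OF add_slot(2)[OF z]]] by simp
  finally have "smA c (Kp t) = smA c (a - z)"
    using inj by (simp add: TKp[OF c(2)] A.sm_add A.sm_diff A.sm_neg)
  hence k: "Kp t = a - z" using A.sm_cancel c(1) by blast
  have 1: "P12 t = a" using arg_cong[OF u2, of P12] P_Uq P_sl(5-8)[OF a] by simp
  have 2: "P21 t = z" using arg_cong[OF k, of P21] P_Kp P_lin P_sl(5-8)[OF a] P_sl(9-12)[OF z] by simp
  have 3: "P11 t = w" by (rule A.half) (use arg_cong[OF j, of P11] P_Jd P_lin P_sl(1-4)[OF w] P_zero neg2 neg2z in simp)
  have 4: "P22 t = 0" by (rule half0) (use arg_cong[OF j, of P22] P_Jd P_lin P_sl(1-4)[OF w] P_zero neg2 neg2z in simp)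
  have "t = a + z + w" using decomp[of t] 1 2 3 4 by (simp add: algebra_simps)
  thus ?thesis using t by simp
qed

lemma main: assumes a: "sl12 a" and b: "sl12 b"
  shows "\<Phi> (mA a b + smA \<sigma> (sA a)) = \<Phi> (mA a b) + \<Phi> (smA \<sigma> (sA a))"
proof -
  define u where "u = mA a b"
  define v where "v = sA a"
  define w where "w = mA b v"
  have su: "sl21 u" using prod1[OF a b] u_def by simp
  have sv: "sl21 v" using s_slot(1)[OF a] v_def by simp
  have sw: "sl11 w" using prod2[OF b sv] w_def by simp
  have aq: "mA a q = a" using a unfolding sl12_def q_def by (simp add: ls)
  have qv: "mA q v = v" using sv unfolding sl21_def q_def by (simp add: ls)
  have e1: "T a (q + b) = a + (u + smA \<sigma> v) + smA \<sigma> w"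
    unfolding T_def using aq qv u_def v_def w_def by (simp add: ls algebra_simps)
  have e2: "T a q = a + smA \<sigma> v" unfolding T_def using aq qv v_def by simp
  have e3: "T a b = u + smA \<sigma> w" unfolding T_def using u_def v_def w_def by simp
  have "\<Phi> (T a (q + b)) = \<Phi> (T a q) + \<Phi> (T a b)" using pinR2[OF S2[OF b]] by simp
  also have "\<dots> = \<Phi> a + \<Phi> (smA \<sigma> v) + (\<Phi> u + \<Phi> (smA \<sigma> w))"
    unfolding e2 e3 using S3[OF a sm_slot(3)[OF sv]] S4[OF su sm_slot(1)[OF sw]] by simp
  finally have "\<Phi> a + \<Phi> (u + smA \<sigma> v) + \<Phi> (smA \<sigma> w) = \<Phi> a + \<Phi> (smA \<sigma> v) + (\<Phi> u + \<Phi> (smA \<sigma> w))"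
    unfolding e1 using S5[OF a add_slot(1)[OF su sm_slot(3)[OF sv]] sm_slot(1)[OF sw]] by simp
  hence "\<Phi> (u + smA \<sigma> v) = \<Phi> u + \<Phi> (smA \<sigma> v)" by (simp add: algebra_simps)
  thus ?thesis using u_def v_def by simp
qed

lemma peirce_sl12: "x \<in> peirce mA p (e - p) \<Longrightarrow> sl12 x"
  unfolding peirce_def sl12_def by (auto simp: ls)

end


lemma wrap:
  assumes "cset smA mA sA e p smB mB sB \<Phi> \<sigma>" "a \<in> peirce mA p (e - p)" "b \<in> peirce mA p (e - p)"
  shows "\<Phi> (mA a b + smA \<sigma> (sA a)) = \<Phi> (mA a b) + \<Phi> (smA \<sigma> (sA a))"
  using cset.main[OF assms(1) cset.peirce_sl12[OF assms(1) assms(2)] cset.peirce_sl12[OF assms(1) assms(3)]] .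

theorem claim2p5:
  fixes smA :: "complex \<Rightarrow> 'a::{real_normed_vector,banach} \<Rightarrow> 'a"
    and mA :: "'a \<Rightarrow> 'a \<Rightarrow> 'a"
    and sA :: "'a \<Rightarrow> 'a" and e :: 'a
    and smB :: "complex \<Rightarrow> 'b::ab_group_add \<Rightarrow> 'b"
    and mB :: "'b \<Rightarrow> 'b \<Rightarrow> 'b" and sB :: "'b \<Rightarrow> 'b"
    and \<Phi> :: "'a \<Rightarrow> 'b"
    and p1 a12 b12 c21 d21 :: 'a
  assumes "alt_W_factor smA mA sA e"
    and "alt_star_algebra smB mB sB"
    and "bij \<Phi>"
    and "projection mA sA p1" and "p1 \<noteq> e"
    and "a12 \<in> peirce mA p1 (e - p1)" and "b12 \<in> peirce mA p1 (e - p1)"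
    and "c21 \<in> peirce mA (e - p1) p1" and "d21 \<in> peirce mA (e - p1) p1"
  shows "(preserves_plus mA sA mB sB \<Phi> \<longrightarrow>
            \<Phi> (mA a12 b12 + sA a12) = \<Phi> (mA a12 b12) + \<Phi> (sA a12) \<and>
            \<Phi> (mA c21 d21 + sA c21) = \<Phi> (mA c21 d21) + \<Phi> (sA c21)) \<and>
         (preserves_minus mA sA mB sB \<Phi> \<longrightarrow>
            \<Phi> (mA a12 b12 - sA a12) = \<Phi> (mA a12 b12) + \<Phi> (- sA a12) \<and>
            \<Phi> (mA c21 d21 - sA c21) = \<Phi> (mA c21 d21) + \<Phi> (- sA c21))"
proof -
  have As: "alt_star_algebra smA mA sA" using assms(1)
    unfolding alt_W_factor_def alt_cstar_algebra_def by simp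
  have un: "\<forall>x. mA e x = x \<and> mA x e = x" using assms(1) unfolding alt_W_factor_def by simp
  interpret A: altstar smA mA sA by (unfold_locales, rule As)
  interpret B: altstar smB mB sB by (unfold_locales, rule assms(2))
  have sp: "sA p1 = p1" and pp: "mA p1 p1 = p1" using assms(4) unfolding projection_def by auto
  have se: "sA e = e" using A.s_unit un by blast
  have sq: "sA (e - p1) = e - p1" using se sp by (simp add: A.s_diff)
  have qq: "mA (e - p1) (e - p1) = e - p1" using un pp by (simp add: A.diffL A.diffR)
  have ee: "e - (e - p1) = p1" by simp
  have c21: "c21 \<in> peirce mA (e - p1) (e - (e - p1))" and d21: "d21 \<in> peirce mA (e - p1) (e - (e - p1))"
    using assms(8,9) ee by simp_all
  have plus: "preserves_plus mA sA mB sB \<Phi> \<Longrightarrow>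
      \<forall>a b. \<Phi> (mA a b + smA 1 (mA b (sA a))) = mB (\<Phi> a) (\<Phi> b) + smB 1 (mB (\<Phi> b) (sB (\<Phi> a)))"
    unfolding preserves_plus_def by (simp add: A.sm_one B.sm_one)
  have minus: "preserves_minus mA sA mB sB \<Phi> \<Longrightarrow>
      \<forall>a b. \<Phi> (mA a b + smA (-1) (mA b (sA a))) = mB (\<Phi> a) (\<Phi> b) + smB (-1) (mB (\<Phi> b) (sB (\<Phi> a)))"
    unfolding preserves_minus_def by (simp add: A.sm_m1 B.sm_m1)
  have cs: "\<And>p \<sigma>. sA p = p \<Longrightarrow> mA p p = p \<Longrightarrow> \<sigma> = 1 \<or> \<sigma> = -1 \<Longrightarrow>
      \<forall>a b. \<Phi> (mA a b + smA \<sigma> (mA b (sA a))) = mB (\<Phi> a) (\<Phi> b) + smB \<sigma> (mB (\<Phi> b) (sB (\<Phi> a))) \<Longrightarrow>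
      cset smA mA sA e p smB mB sB \<Phi> \<sigma>"
    unfolding cset_def using As assms(2,3) un by blast
  show ?thesis
  proof (intro conjI impI)
    assume h: "preserves_plus mA sA mB sB \<Phi>"
    show "\<Phi> (mA a12 b12 + sA a12) = \<Phi> (mA a12 b12) + \<Phi> (sA a12)"
      using wrap[OF cs[OF sp pp _ plus[OF h]] assms(6,7)] by (simp add: A.sm_one)
    show "\<Phi> (mA c21 d21 + sA c21) = \<Phi> (mA c21 d21) + \<Phi> (sA c21)"
      using wrap[OF cs[OF sq qq _ plus[OF h]] c21 d21] by (simp add: A.sm_one)
  next
    assume h: "preserves_minus mA sA mB sB \<Phi>"
    show "\<Phi> (mA a12 b12 - sA a12) = \<Phi> (mA a12 b12) + \<Phi> (- sA a12)"
      using wrap[OF cs[OF sp pp _ minus[OF h]] assms(6,7)] by (simp add: A.sm_m1)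
    show "\<Phi> (mA c21 d21 - sA c21) = \<Phi> (mA c21 d21) + \<Phi> (- sA c21)"
      using wrap[OF cs[OF sq qq _ minus[OF h]] c21 d21] by (simp add: A.sm_m1)
  qed
qed
end
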